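(* Let $\gamma_X=(X,d_X(\cdot))$ be any $l$-Lipschitz dynamic metric space and let $\alpha\in(0,\infty)$. Then $d_{\mathtt{dyn}}(\gamma_X,\gamma_X^\alpha)\le l\alpha$.
   Context: A dynamic metric space (DMS) is a pair $\gamma_X=(X,d_X(\cdot))$ where $X$ is a nonempty finite set and $d_X(\cdot):\mathbf{R}\times X\times X\to\mathbf{R}_+$ satisfies: each $d_X(t)$ is a pseudometric, some $d_X(t_0)$ is a metric, and $t\mapsto d_X(t)(x,x')$ is continuous for all $x,x'$. It is $l$-Lipschitz if each $t\mapsto d_X(t)(x,x')$ is $l$-Lipschitz. For $t\in\mathbf{R}$, $\lfloor t\rfloor_\alpha$ is the greatest element of $\alpha\mathbf{Z}$ not exceeding $t$. The $\alpha$-discretization $\gamma_X^\alpha$ is the family $(X,d_X^{\alpha\mathbf{Z}}(t))_{t\in\mathbf{R}}$ with $d_X^{\alpha\mathbf{Z}}(t):=d_X(\lfloor t\rfloor_\alpha)$. For families $\gamma_X=(X,d_X(\cdot))$, $\gamma_Y=(Y,d_Y(\cdot))$ of pseudometrics on finite sets indexed by $t\in\mathbf{R}$ (such as DMSs and their discretizations), let $(\bigvee_I d_X)(x,x'):=\min_{s\in I}d_X(s)(x,x')$ for closed intervals $I$, and $[t]^\varepsilon=[t-\varepsilon,t+\varepsilon]$. A tripod between $X,Y$ is a set $Z$ with surjections $\varphi_X:Z\to X$, $\varphi_Y:Z\to Y$; it is an $\varepsilon$-tripod if for all $t$, $z,z'$: $(\bigvee_{[t]^\varepsilon}d_X)(\varphi_X(z),\varphi_X(z'))\le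 d_Y(t)(\varphi_Y(z),\varphi_Y(z'))+2\varepsilon$ and $(\bigvee_{[t]^\varepsilon}d_Y)(\varphi_Y(z),\varphi_Y(z'))\le d_X(t)(\varphi_X(z),\varphi_X(z'))+2\varepsilon$. $d_{\mathtt{dyn}}(\gamma_X,\gamma_Y)$ is the minimum over tripods of the infimum of $\varepsilon$ for which the tripod is an $\varepsilon$-tripod. *)

theory Defs
  imports "HOL-Analysis.Analysis"
begin

definition pseudometric_on :: "'a set \<Rightarrow> ('a \<Rightarrow> 'a \<Rightarrow> real) \<Rightarrow> bool" where
  "pseudometric_on X d \<longleftrightarrow>
     (\<forall>x\<in>X. \<forall>y\<in>X. d x y \<ge> 0) \<and>
     (\<forall>x\<in>X. d x x = 0) \<and>
     (\<forall>x\<in>X. \<forall>y\<in>X. d x y = d y x) \<and>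
     (\<forall>x\<in>X. \<forall>y\<in>X. \<forall>z\<in>X. d x z \<le> d x y + d y z)"

definition metric_on :: "'a set \<Rightarrow> ('a \<Rightarrow> 'a \<Rightarrow> real) \<Rightarrow> bool" where
  "metric_on X d \<longleftrightarrow> pseudometric_on X d \<and> (\<forall>x\<in>X. \<forall>y\<in>X. d x y = 0 \<longrightarrow> x = y)"

definition dms :: "'a set \<Rightarrow> (real \<Rightarrow> 'a \<Rightarrow> 'a \<Rightarrow> real) \<Rightarrow> bool" where
  "dms X d \<longleftrightarrow> finite X \<and> X \<noteq> {} \<and>
     (\<forall>t. pseudometric_on X (d t)) \<and>
     (\<exists>t0. metric_on X (d t0)) \<and>
     (\<forall>x\<in>X. \<forall>x'\<in>X. continuous_on UNIV (\<lambda>t. d t x x'))"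

definition lipschitz_dms :: "real \<Rightarrow> 'a set \<Rightarrow> (real \<Rightarrow> 'a \<Rightarrow> 'a \<Rightarrow> real) \<Rightarrow> bool" where
  "lipschitz_dms l X d \<longleftrightarrow> dms X d \<and>
     (\<forall>x\<in>X. \<forall>x'\<in>X. \<forall>s t. \<bar>d s x x' - d t x x'\<bar> \<le> l * \<bar>s - t\<bar>)"

definition floor_grid :: "real \<Rightarrow> real \<Rightarrow> real" where
  "floor_grid \<alpha> t = \<alpha> * of_int \<lfloor>t / \<alpha>\<rfloor>"

definition discretize :: "real \<Rightarrow> (real \<Rightarrow> 'a \<Rightarrow> 'a \<Rightarrow> real) \<Rightarrow> (real \<Rightarrow> 'a \<Rightarrow> 'a \<Rightarrow> real)" where
  "discretize \<alpha> d = (\<lambda>t. d (floor_grid \<alpha> t))"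

definition smear :: "(real \<Rightarrow> 'a \<Rightarrow> 'a \<Rightarrow> real) \<Rightarrow> real \<Rightarrow> real \<Rightarrow> 'a \<Rightarrow> 'a \<Rightarrow> real" where
  "smear d t \<epsilon> x x' = Inf ((\<lambda>s. d s x x') ` {t - \<epsilon> .. t + \<epsilon>})"

definition tripod :: "'z set \<Rightarrow> ('z \<Rightarrow> 'a) \<Rightarrow> ('z \<Rightarrow> 'b) \<Rightarrow> 'a set \<Rightarrow> 'b set \<Rightarrow> bool" where
  "tripod Z fX fY X Y \<longleftrightarrow> fX ` Z = X \<and> fY ` Z = Y"

definition eps_tripod ::
  "real \<Rightarrow> 'z set \<Rightarrow> ('z \<Rightarrow> 'a) \<Rightarrow> ('z \<Rightarrow> 'b) \<Rightarrow> 'a set \<Rightarrow> (real \<Rightarrow> 'a \<Rightarrow> 'a \<Rightarrow> real)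
     \<Rightarrow> 'b set \<Rightarrow> (real \<Rightarrow> 'b \<Rightarrow> 'b \<Rightarrow> real) \<Rightarrow> bool" where
  "eps_tripod \<epsilon> Z fX fY X dX Y dY \<longleftrightarrow> tripod Z fX fY X Y \<and> \<epsilon> \<ge> 0 \<and>
     (\<forall>t. \<forall>z\<in>Z. \<forall>z'\<in>Z.
        smear dX t \<epsilon> (fX z) (fX z') \<le> dY t (fY z) (fY z') + 2 * \<epsilon> \<and>
        smear dY t \<epsilon> (fY z) (fY z') \<le> dX t (fX z) (fX z') + 2 * \<epsilon>)"

text \<open>Dynamic GH distance (value in extended reals; \<infinity> if no \<epsilon> works).
  Tripods are taken with Z a set of pairs in X x Y; this loses no generality since
  every tripod can be replaced by the image of (fX, fY) without changing the conditions.\<close>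
definition d_dyn :: "'a set \<Rightarrow> (real \<Rightarrow> 'a \<Rightarrow> 'a \<Rightarrow> real) \<Rightarrow> 'b set \<Rightarrow> (real \<Rightarrow> 'b \<Rightarrow> 'b \<Rightarrow> real) \<Rightarrow> ereal" where
  "d_dyn X dX Y dY =
     (INF Z \<in> {Z. tripod Z fst snd X Y}.
        Inf (ereal ` {\<epsilon>. eps_tripod \<epsilon> Z fst snd X dX Y dY}))"

end

theory Submission
  imports Defs
begin

lemma fg_bounds:
  assumes "\<alpha> > 0"
  shows "floor_grid \<alpha> t \<le> t" "t - floor_grid \<alpha> t \<le> \<alpha>"
proof -
  have a: "of_int \<lfloor>t / \<alpha>\<rfloor> \<le> t / \<alpha>" by (rule of_int_floor_le)
  have b: "t / \<alpha> - 1 < of_int \<lfloor>t / \<alpha>\<rfloor>" by linarith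
  from a have "\<alpha> * of_int \<lfloor>t / \<alpha>\<rfloor> \<le> \<alpha> * (t / \<alpha>)"
    using assms by (intro mult_left_mono) auto
  then show "floor_grid \<alpha> t \<le> t" using assms by (simp add: floor_grid_def)
  from b have "\<alpha> * (t / \<alpha> - 1) \<le> \<alpha> * of_int \<lfloor>t / \<alpha>\<rfloor>"
    using assms by (intro mult_left_mono) auto
  then show "t - floor_grid \<alpha> t \<le> \<alpha>" using assms
    by (simp add: floor_grid_def right_diff_distrib)
qed

lemma smear_le:
  assumes "\<And>s. f s x x' \<ge> 0" "s \<in> {t - e .. t + e}"
  shows "smear f t e x x' \<le> f s x x'"
  unfolding smear_def
  by (rule cInf_lower) (use assms in \<open>auto intro!: bdd_belowI[where m=0]\<close>)

theorem propositionA3: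
  fixes X :: "'a set" and d :: "real \<Rightarrow> 'a \<Rightarrow> 'a \<Rightarrow> real" and l \<alpha> :: real
  assumes "lipschitz_dms l X d" and "\<alpha> > 0"
  shows "d_dyn X d X (discretize \<alpha> d) \<le> ereal (l * \<alpha>)"
proof -
  have dms: "dms X d" and lip: "\<And>x x' s t. x \<in> X \<Longrightarrow> x' \<in> X \<Longrightarrow> \<bar>d s x x' - d t x x'\<bar> \<le> l * \<bar>s - t\<bar>"
    using assms(1) unfolding lipschitz_dms_def by auto
  from dms obtain x0 where x0: "x0 \<in> X" unfolding dms_def by auto
  have "\<bar>d 1 x0 x0 - d 0 x0 x0\<bar> \<le> l * \<bar>1 - 0\<bar>" using lip x0 by blast
  then have l0: "l \<ge> 0" by simp
  have nn: "\<And>s x x'. x \<in> X \<Longrightarrow> x' \<in> X \<Longrightarrow> d s x x' \<ge> 0"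
    using dms unfolding dms_def pseudometric_on_def by blast
  define Z where "Z = (\<lambda>x. (x, x)) ` X"
  define e where "e = l * \<alpha>"
  have e0: "e \<ge> 0" using l0 assms(2) by (simp add: e_def)
  have tri: "tripod Z fst snd X X" unfolding tripod_def Z_def by force
  have "eps_tripod e Z fst snd X d X (discretize \<alpha> d)"
    unfolding eps_tripod_def
  proof (intro conjI tri e0 allI ballI)
    fix t z z' assume z: "z \<in> Z" "z' \<in> Z"
    then obtain x x' where xx: "x \<in> X" "x' \<in> X" "z = (x, x)" "z' = (x', x')"
      unfolding Z_def by auto
    have fb: "floor_grid \<alpha> t \<le> t" "t - floor_grid \<alpha> t \<le> \<alpha>"
      using fg_bounds assms(2) by auto
    have L: "\<bar>d t x x' - d (floor_grid \<alpha> t) x x'\<bar> \<le> l * \<alpha>"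
    proof -
      have "\<bar>d t x x' - d (floor_grid \<alpha> t) x x'\<bar> \<le> l * \<bar>t - floor_grid \<alpha> t\<bar>"
        using lip xx by blast
      also have "\<dots> \<le> l * \<alpha>" using fb l0 by (intro mult_left_mono) auto
      finally show ?thesis .
    qed
    have "smear d t e x x' \<le> d t x x'"
      by (rule smear_le) (use nn xx e0 in auto)
    then show "smear d t e (fst z) (fst z') \<le> discretize \<alpha> d t (snd z) (snd z') + 2 * e"
      using xx L e0 by (simp add: discretize_def e_def)
    have "smear (discretize \<alpha> d) t e x x' \<le> discretize \<alpha> d t x x'"
      by (rule smear_le) (use nn xx e0 in \<open>auto simp: discretize_def\<close>)
    then show "smear (discretize \<alpha> d) t e (snd z) (snd z') \<le> d t (fst z) (fst z') + 2 * e"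
      using xx L e0 by (simp add: discretize_def e_def)
  qed
  then have "Inf (ereal ` {\<epsilon>. eps_tripod \<epsilon> Z fst snd X d X (discretize \<alpha> d)}) \<le> ereal e"
    by (intro Inf_lower) auto
  then show ?thesis unfolding d_dyn_def e_def
    using tri by (intro INF_lower2[of Z]) auto
qed

end
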